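(* Let $\varrho$ be a density operator on a Hilbert space $\mathcal H_d$ of finite dimension $d$. Then $$\sup_{\xi}\|\varrho-\xi\|_{\mathrm{tr}}=2\big(1-b(\varrho)\big),$$ where the supremum is over all density operators $\xi$ on $\mathcal H_d$ and $\|A\|_{\mathrm{tr}}=\operatorname{tr}|A|$.
   Context: For the convex set $Z=\mathcal S(\mathcal H_d)$ of density operators and $x,y\in Z$, the weight function is $t_y(x)=\sup\{0\leq t<1 : \frac{y-tx}{1-t}\in Z\}$, and the boundariness of $y$ is $b(y)=\inf_{x\in Z}t_y(x)$. (For states, $b(\varrho)$ equals the smallest eigenvalue of $\varrho$.) *)

theory Defs
  imports "HOL-Analysis.Analysis"
begin

text \<open>Operators on the d-dimensional Hilbert space H_d = complex^'n, d = CARD('n),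
  represented as complex matrices complex^'n^'n.\<close>

definition cmat_adjoint :: "complex^'n^'n \<Rightarrow> complex^'n^'n" where
  "cmat_adjoint A = (\<chi> i j. cnj (A $ j $ i))"

definition cmat_hermitian :: "complex^'n^'n \<Rightarrow> bool" where
  "cmat_hermitian A \<longleftrightarrow> cmat_adjoint A = A"

definition cmat_psd :: "complex^'n^'n \<Rightarrow> bool" where
  "cmat_psd A \<longleftrightarrow> cmat_hermitian A \<and>
     (\<forall>x::complex^'n. 0 \<le> Re (\<Sum>i\<in>UNIV. cnj (x $ i) * (A *v x) $ i))"

definition density :: "complex^'n^'n \<Rightarrow> bool" where
  "density A \<longleftrightarrow> cmat_psd A \<and> trace A = 1"

definition cmat_abs :: "complex^'n^'n \<Rightarrow> complex^'n^'n" where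
  "cmat_abs A = (THE P. cmat_psd P \<and> P ** P = cmat_adjoint A ** A)"

definition trace_norm :: "complex^'n^'n \<Rightarrow> real" where
  "trace_norm A = Re (trace (cmat_abs A))"

definition weight :: "complex^'n^'n \<Rightarrow> complex^'n^'n \<Rightarrow> real" where
  "weight y x = Sup {t::real. 0 \<le> t \<and> t < 1 \<and> density ((1 / (1 - t)) *\<^sub>R (y - t *\<^sub>R x))}"

definition boundariness :: "complex^'n^'n \<Rightarrow> real" where
  "boundariness y = Inf (weight y ` {x. density x})"

end

theory Submission imports Defs begin

definition cinner :: "complex^'n \<Rightarrow> complex^'n \<Rightarrow> complex" where
  "cinner x y = (\<Sum>i\<in>UNIV. cnj (x$i) * y$i)"

lemma cinner_add_right: "cinner x (y + z) = cinner x y + cinner x z"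
  by (simp add: cinner_def distrib_left sum.distrib)
lemma cinner_add_left: "cinner (x + y) z = cinner x z + cinner y z"
  by (simp add: cinner_def distrib_right sum.distrib)
lemma cinner_diff_right: "cinner x (y - z) = cinner x y - cinner x z"
  by (simp add: cinner_def right_diff_distrib sum_subtractf)
lemma cinner_diff_left: "cinner (x - y) z = cinner x z - cinner y z"
  by (simp add: cinner_def left_diff_distrib sum_subtractf)
lemma cinner_scale_right: "cinner x (c *s y) = c * cinner x y"
  by (simp add: cinner_def sum_distrib_left algebra_simps)
lemma cinner_scale_left: "cinner (c *s x) y = cnj c * cinner x y"
  by (simp add: cinner_def sum_distrib_left algebra_simps)
lemma cinner_zero_right[simp]: "cinner x 0 = 0" by (simp add: cinner_def)
lemma cinner_zero_left[simp]: "cinner 0 x = 0" by (simp add: cinner_def)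
lemma cinner_sum_right: "cinner x (\<Sum>i\<in>S. f i) = (\<Sum>i\<in>S. cinner x (f i))"
  by (induct S rule: infinite_finite_induct) (auto simp: cinner_add_right)
lemma cinner_sum_left: "cinner (\<Sum>i\<in>S. f i) x = (\<Sum>i\<in>S. cinner (f i) x)"
  by (induct S rule: infinite_finite_induct) (auto simp: cinner_add_left)
lemma cinner_commute: "cinner y x = cnj (cinner x y)"
  by (simp add: cinner_def mult.commute)
lemma cinner_self: "cinner x x = of_real ((norm x)^2)"
proof -
  have "cinner x x = (\<Sum>i\<in>UNIV. of_real ((norm (x$i))^2))"
    unfolding cinner_def by (rule sum.cong) (auto, metis complex_norm_square mult.commute of_real_power)
  also have "\<dots> = of_real (\<Sum>i\<in>UNIV. (norm (x$i))^2)" by simp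
  also have "(\<Sum>i\<in>UNIV. (norm (x$i))^2) = (norm x)^2"
    by (simp add: norm_vec_def L2_set_def sum_nonneg)
  finally show ?thesis .
qed
lemma cinner_self_eq_0[simp]: "cinner x x = 0 \<longleftrightarrow> x = 0"
  by (simp add: cinner_self)

lemma cinner_adjoint: "cinner x (A *v y) = cinner (cmat_adjoint A *v x) y"
  unfolding cinner_def cmat_adjoint_def matrix_vector_mult_def
  apply (simp add: sum_distrib_left sum_distrib_right)
  apply (subst sum.swap)
  apply (simp add: mult_ac)
  done

lemma cinner_herm: "cmat_hermitian A \<Longrightarrow> cinner x (A *v y) = cinner (A *v x) y"
  by (simp add: cinner_adjoint cmat_hermitian_def)

lemma herm_form_real: "cmat_hermitian A \<Longrightarrow> cinner x (A *v x) = of_real (Re (cinner x (A *v x)))"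
  by (metis cinner_commute cinner_herm complex_is_Real_iff Reals_cnj_iff of_real_Re)

lemma psd_iff: "cmat_psd A \<longleftrightarrow> cmat_hermitian A \<and> (\<forall>x. 0 \<le> Re (cinner x (A *v x)))"
  by (simp add: cmat_psd_def cinner_def)

lemma scaleR_cvec: "(c::real) *\<^sub>R (x::complex^'n) = complex_of_real c *s x"
  unfolding vec_eq_iff by (simp add: scaleR_conv_of_real[where 'a=complex])

lemma smult_sum: "(c::complex) *s (\<Sum>k\<in>S. f k) = (\<Sum>k\<in>S. c *s f k)"
  by (induct S rule: infinite_finite_induct) (auto simp: vector_add_ldistrib)

lemma mv_scale: "(A::complex^'n^'n) *v (c *s x) = c *s (A *v x)"
  by (simp add: matrix_vector_mult_def vec_eq_iff sum_distrib_left algebra_simps)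

lemma cinner_scaleR_right: "cinner x (c *\<^sub>R y) = of_real c * cinner x y"
  by (simp add: scaleR_cvec cinner_scale_right)

definition eigsys :: "complex^'n^'n \<Rightarrow> 'n set \<Rightarrow> ('n \<Rightarrow> complex^'n) \<Rightarrow> ('n \<Rightarrow> real) \<Rightarrow> bool" where
  "eigsys A I u d \<longleftrightarrow> (\<forall>i\<in>I. \<forall>j\<in>I. cinner (u i) (u j) = (if i = j then 1 else 0)) \<and>
     (\<forall>i\<in>I. A *v u i = of_real (d i) *s u i)"

lemma exists_orth:
  fixes u :: "'n \<Rightarrow> complex^'n"
  assumes "I \<noteq> UNIV"
  shows "\<exists>x. x \<noteq> 0 \<and> (\<forall>j\<in>I. cinner (u j) x = 0)"
proof (rule ccontr)
  assume H: "\<not> ?thesis"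
  define L where "L x = (\<chi> k. if k \<in> I then cinner (u k) x else 0)" for x :: "complex^'n"
  have lin: "linear L"
  proof (rule linearI)
    show "L (x + y) = L x + L y" for x y by (auto simp: L_def vec_eq_iff cinner_add_right)
    show "L (r *\<^sub>R x) = r *\<^sub>R L x" for r x
      unfolding vec_eq_iff
    proof
      fix k
      show "L (r *\<^sub>R x) $ k = (r *\<^sub>R L x) $ k"
        by (simp add: L_def cinner_scaleR_right del: scaleR_conv_of_real)
           (simp add: scaleR_conv_of_real[where 'a=complex])
    qed
  qed
  have "inj L"
  proof (rule injI)
    fix x y assume "L x = L y"
    then have "\<forall>j\<in>I. cinner (u j) (x - y) = 0"
      by (auto simp: L_def vec_eq_iff cinner_diff_right) (metis)
    with H have "x - y = 0" by blast
    then show "x = y" by simp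
  qed
  then have "surj L" using lin linear_inj_imp_surj by blast
  obtain k where k: "k \<notin> I" using assms by auto
  obtain x where "axis k 1 = L x" using \<open>surj L\<close> by (metis surjD)
  then have "(axis k 1 :: complex^'n) $ k = L x $ k" by simp
  with k show False by (simp add: L_def axis_def)
qed

lemma orth_complete_zero:
  fixes u :: "'n \<Rightarrow> complex^'n"
  assumes on: "\<forall>i j. cinner (u i) (u j) = (if i = j then 1 else 0)"
    and x: "\<forall>j. cinner (u j) x = 0"
  shows "x = 0"
proof -
  define M where "M c = (\<Sum>k\<in>UNIV. (c $ k) *s u k)" for c :: "complex^'n"
  have cM: "cinner (u j) (M c) = c $ j" for j c
  proof -
    have "cinner (u j) (M c) = (\<Sum>k\<in>UNIV. c $ k * (if j = k then 1 else 0))"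
      unfolding M_def cinner_sum_right cinner_scale_right using on by simp
    also have "\<dots> = c $ j" by (simp add: if_distrib sum.delta cong: if_cong)
    finally show ?thesis .
  qed
  have lin: "linear M"
    by (rule linearI) (auto simp: M_def scaleR_cvec vector_sadd_rdistrib sum.distrib
        vector_smult_assoc smult_sum)
  have "inj M"
  proof (rule injI)
    fix a b assume "M a = M b"
    then show "a = b" using cM by (metis vec_eq_iff)
  qed
  then have "surj M" using lin linear_inj_imp_surj by blast
  then obtain c where c: "x = M c" by (metis surjD)
  have "c = 0" using x cM c by (simp add: vec_eq_iff)
  then show ?thesis using c by (simp add: M_def)
qed

lemma cont_cinner: "continuous_on X (\<lambda>x. cinner a x)"
  unfolding cinner_def by (intro continuous_intros)

lemma cont_q: "continuous_on X (\<lambda>x. Re (cinner x ((A::complex^'n^'n) *v x)))"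
  unfolding cinner_def matrix_vector_mult_def by (simp, intro continuous_intros)

lemma q_scale: "Re (cinner (complex_of_real c *s x) (A *v (complex_of_real c *s x))) = c^2 * Re (cinner x (A *v x))"
  by (simp add: mv_scale cinner_scale_left cinner_scale_right power2_eq_square)

lemma spectral_step:
  fixes A :: "complex^'n^'n"
  assumes herm: "cmat_hermitian A" and es: "eigsys A I u d" and I: "I \<noteq> UNIV"
  shows "\<exists>w \<mu>. cinner w w = 1 \<and> (\<forall>j\<in>I. cinner (u j) w = 0) \<and> A *v w = complex_of_real \<mu> *s w"
proof -
  define W where "W = {x. \<forall>j\<in>I. cinner (u j) x = 0}"
  have Wadd: "x + y \<in> W" if "x \<in> W" "y \<in> W" for x y
    using that by (simp add: W_def cinner_add_right)
  have Wsc: "c *s x \<in> W" if "x \<in> W" for x c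
    using that by (simp add: W_def cinner_scale_right)
  have WA: "A *v x \<in> W" if "x \<in> W" for x
  proof -
    have "cinner (u j) (A *v x) = 0" if "j \<in> I" for j
    proof -
      have "cinner (u j) (A *v x) = cinner (A *v u j) x" using herm cinner_herm by blast
      also have "\<dots> = 0" using es that \<open>x \<in> W\<close> by (simp add: eigsys_def W_def cinner_scale_left)
      finally show ?thesis .
    qed
    then show ?thesis by (simp add: W_def)
  qed
  have clW: "closed W"
  proof -
    have "W = (\<Inter>j\<in>I. {x. cinner (u j) x = 0})" by (auto simp: W_def)
    moreover have "closed {x. cinner (u j) x = 0}" for j
      by (rule closed_Collect_eq) (auto intro: cont_cinner)
    ultimately show ?thesis by auto
  qed
  define S where "S = W \<inter> sphere 0 1"
  have cS: "compact S" unfolding S_def using clW by (simp add: closed_Int_compact)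
  obtain x0 where x0: "x0 \<noteq> 0" "\<forall>j\<in>I. cinner (u j) x0 = 0" using exists_orth[OF I] by blast
  have e0: "(complex_of_real (1 / norm x0)) *s x0 = (1 / norm x0) *\<^sub>R x0" by (simp only: scaleR_cvec)
  have "(complex_of_real (1 / norm x0)) *s x0 \<in> S"
    using x0 unfolding e0 by (auto simp: S_def W_def cinner_scaleR_right)
  then have "S \<noteq> {}" by auto
  then obtain w where w: "w \<in> S" and wmin: "\<And>y. y \<in> S \<Longrightarrow> Re (cinner w (A *v w)) \<le> Re (cinner y (A *v y))"
    using continuous_attains_inf[OF cS _ cont_q] by blast
  define \<mu> where "\<mu> = Re (cinner w (A *v w))"
  have wW: "w \<in> W" and wn: "norm w = 1" using w by (auto simp: S_def)
  have ww: "cinner w w = 1" using wn by (simp add: cinner_self)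
  have key: "\<mu> * (norm x)^2 \<le> Re (cinner x (A *v x))" if "x \<in> W" for x
  proof (cases "x = 0")
    case True then show ?thesis by simp
  next
    case False
    define y where "y = complex_of_real (1 / norm x) *s x"
    have e0: "y = (1 / norm x) *\<^sub>R x" unfolding y_def by (simp only: scaleR_cvec)
    have "y \<in> W" using that Wsc y_def by blast
    then have "y \<in> S" using False by (auto simp: S_def e0)
    then have "\<mu> \<le> Re (cinner y (A *v y))" using wmin \<mu>_def by auto
    also have "\<dots> = (1 / norm x)^2 * Re (cinner x (A *v x))" unfolding y_def by (rule q_scale)
    finally have "\<mu> \<le> (1 / norm x)^2 * Re (cinner x (A *v x))" .
    then have "\<mu> * (norm x)^2 \<le> (1 / norm x)^2 * Re (cinner x (A *v x)) * (norm x)^2"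
      by (simp add: mult_right_mono)
    also have "\<dots> = Re (cinner x (A *v x))" using False by (simp add: field_simps)
    finally show ?thesis .
  qed
  define B where "B x = A *v x - complex_of_real \<mu> *s x" for x
  have Badd: "B (x + z) = B x + B z" for x z
    by (simp add: B_def matrix_vector_right_distrib vector_add_ldistrib)
  have Bsc: "B (c *s x) = c *s B x" for c x
    by (simp add: B_def mv_scale vector_ssub_ldistrib vector_smult_assoc mult.commute)
  have Bh: "cinner x (B z) = cinner (B x) z" for x z
    by (simp add: B_def cinner_diff_right cinner_diff_left cinner_scale_right cinner_scale_left
        cinner_herm[OF herm])
  have GW: "0 \<le> Re (cinner x (B x))" if "x \<in> W" for x
    using key[OF that] by (simp add: B_def cinner_diff_right cinner_scale_right cinner_self)
  have Gw: "cinner w (B w) = 0"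
    using herm_form_real[OF herm, of w] by (simp add: B_def cinner_diff_right cinner_scale_right ww \<mu>_def)
  define y where "y = B w"
  have yW: "y \<in> W"
  proof -
    have "A *v w \<in> W" "complex_of_real \<mu> *s w \<in> W" using wW WA Wsc by auto
    then show ?thesis unfolding y_def B_def W_def by (simp add: cinner_diff_right)
  qed
  define n where "n = Re (cinner y y)"
  define c where "c = Re (cinner y (B y))"
  have expand: "Re (cinner (w + complex_of_real s *s y) (B (w + complex_of_real s *s y))) = 2 * s * n + s^2 * c" for s
  proof -
    have "cinner (w + complex_of_real s *s y) (B (w + complex_of_real s *s y))
      = cinner w (B w) + complex_of_real s * cinner w (B y) + complex_of_real s * cinner y (B w)
        + complex_of_real s * complex_of_real s * cinner y (B y)"
      apply (simp only: Badd Bsc cinner_add_left cinner_add_right cinner_scale_left cinner_scale_right complex_cnj_complex_of_real)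
      apply (simp only: distrib_left mult.assoc add.assoc)
      apply (simp only: add.left_commute)
      done
    also have "cinner w (B y) = cinner y y" unfolding Bh[of w y] by (simp only: y_def)
    also have "cinner y (B w) = cinner y y" by (simp only: y_def)
    finally show ?thesis using Gw by (simp add: n_def c_def power2_eq_square)
  qed
  have n0: "n = 0"
  proof (rule ccontr)
    assume "n \<noteq> 0"
    then have np: "n > 0" unfolding n_def by (simp add: cinner_self)
    define s where "s = - n / (\<bar>c\<bar> + 1)"
    have "w + complex_of_real s *s y \<in> W" using wW yW Wadd Wsc by blast
    then have "0 \<le> 2 * s * n + s^2 * c" using GW expand by metis
    moreover have "2 * s * n + s^2 * c < 0"
    proof -
      define a where "a = \<bar>c\<bar> + 1"
      have ap: "a > 0" by (simp add: a_def)
      have sa: "s = - n / a" by (simp add: s_def a_def)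
      have "s^2 * c \<le> s^2 * a" by (rule mult_left_mono) (auto simp: a_def)
      also have "s^2 * a = n^2 / a" using ap by (simp add: sa power2_eq_square field_simps)
      finally have 1: "s^2 * c \<le> n^2 / a" .
      have 2: "2 * s * n = - 2 * (n^2 / a)" by (simp add: sa power2_eq_square field_simps)
      have "n^2 / a > 0" using np ap by simp
      then show ?thesis using 1 2 by linarith
    qed
    ultimately show False by simp
  qed
  then have "y = 0" unfolding n_def by (simp add: cinner_self)
  then have "A *v w = complex_of_real \<mu> *s w" by (simp add: y_def B_def)
  then show ?thesis using ww wW W_def by blast
qed

lemma spectral_partial:
  fixes A :: "complex^'n^'n"
  assumes herm: "cmat_hermitian A"
  shows "\<exists>u d. eigsys A I u d"
proof (induct I rule: finite_induct[OF finite])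
  case 1 then show ?case by (simp add: eigsys_def)
next
  case (2 i I)
  then obtain u d where es: "eigsys A I u d" by blast
  have "I \<noteq> UNIV" using 2 by auto
  then obtain w \<mu> where w: "cinner w w = 1" "\<forall>j\<in>I. cinner (u j) w = 0" "A *v w = complex_of_real \<mu> *s w"
    using spectral_step[OF herm es] by blast
  have w2: "\<forall>j\<in>I. cinner w (u j) = 0" using w(2) by (metis cinner_commute complex_cnj_zero)
  have "eigsys A (insert i I) (u(i := w)) (d(i := \<mu>))"
    using es w w2 2(2) unfolding eigsys_def by auto
  then show ?case by blast
qed

definition ON :: "('n \<Rightarrow> complex^'n) \<Rightarrow> bool" where
  "ON u \<longleftrightarrow> (\<forall>i j. cinner (u i) (u j) = (if i = j then 1 else 0))"

lemma spectral:
  fixes A :: "complex^'n^'n"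
  assumes herm: "cmat_hermitian A"
  shows "\<exists>u d. ON u \<and> (\<forall>i. A *v u i = complex_of_real (d i) *s u i)"
  using spectral_partial[OF herm, of UNIV] by (auto simp: eigsys_def ON_def)

lemma ON_expand:
  assumes "ON u" shows "x = (\<Sum>i\<in>UNIV. cinner (u i) x *s u i)"
proof -
  define z where "z = x - (\<Sum>i\<in>UNIV. cinner (u i) x *s u i)"
  have "cinner (u j) z = 0" for j
  proof -
    have "cinner (u j) (\<Sum>i\<in>UNIV. cinner (u i) x *s u i) = (\<Sum>i\<in>UNIV. cinner (u i) x * (if j = i then 1 else 0))"
      using assms by (simp add: cinner_sum_right cinner_scale_right ON_def)
    also have "\<dots> = cinner (u j) x" by (simp add: if_distrib sum.delta cong: if_cong)
    finally show ?thesis by (simp add: z_def cinner_diff_right)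
  qed
  then have "z = 0" using orth_complete_zero assms ON_def by blast
  then show ?thesis by (simp add: z_def)
qed

lemma ON_parseval:
  assumes "ON u" shows "cinner x y = (\<Sum>i\<in>UNIV. cnj (cinner (u i) x) * cinner (u i) y)"
proof -
  have "cinner x y = cinner x (\<Sum>i\<in>UNIV. cinner (u i) y *s u i)" using ON_expand[OF assms] by metis
  also have "\<dots> = (\<Sum>i\<in>UNIV. cinner (u i) y * cinner x (u i))"
    by (simp add: cinner_sum_right cinner_scale_right)
  also have "\<dots> = (\<Sum>i\<in>UNIV. cnj (cinner (u i) x) * cinner (u i) y)"
    by (simp add: cinner_commute[of x] mult.commute)
  finally show ?thesis .
qed

lemma zcnj: "z * cnj z = complex_of_real ((cmod z)^2)"
  by (metis complex_norm_square of_real_power)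

lemma ON_norm:
  assumes "ON u" shows "(norm x)^2 = (\<Sum>i\<in>UNIV. (cmod (cinner (u i) x))^2)"
proof -
  have "complex_of_real ((norm x)^2) = (\<Sum>i\<in>UNIV. complex_of_real ((cmod (cinner (u i) x))^2))"
    unfolding cinner_self[symmetric] ON_parseval[OF assms, of x x]
  proof (rule sum.cong)
    fix i
    have "cinner x (u i) = cnj (cinner (u i) x)" by (rule cinner_commute)
    then show "cnj (cinner (u i) x) * cinner (u i) x = complex_of_real ((cmod (cinner (u i) x))^2)"
      by (simp only: mult.commute[of "cnj _"] zcnj)
  qed simp
  then show ?thesis by (metis of_real_eq_iff of_real_sum)
qed

lemma ON_norm_le:
  assumes "ON u" shows "(cmod (cinner (u i) x))^2 \<le> (norm x)^2"
  unfolding ON_norm[OF assms, of x] by (rule member_le_sum) auto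

lemma eig_apply:
  assumes "ON u" "\<forall>i. A *v u i = complex_of_real (d i) *s u i"
  shows "A *v x = (\<Sum>i\<in>UNIV. (complex_of_real (d i) * cinner (u i) x) *s u i)"
proof -
  have lin: "A *v (\<Sum>i\<in>S. f i) = (\<Sum>i\<in>S. A *v f i)" for S f
    by (induct S rule: infinite_finite_induct) (auto simp: matrix_vector_right_distrib)
  have "A *v x = A *v (\<Sum>i\<in>UNIV. cinner (u i) x *s u i)" using ON_expand[OF assms(1)] by metis
  also have "\<dots> = (\<Sum>i\<in>UNIV. (complex_of_real (d i) * cinner (u i) x) *s u i)"
    unfolding lin using assms(2) by (simp add: mv_scale vector_smult_assoc mult.commute)
  finally show ?thesis .
qed

lemma eig_form:
  assumes "ON u" "\<forall>i. A *v u i = complex_of_real (d i) *s u i"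
  shows "Re (cinner x (A *v x)) = (\<Sum>i\<in>UNIV. d i * (cmod (cinner (u i) x))^2)"
proof -
  have "cinner x (A *v x) = (\<Sum>i\<in>UNIV. complex_of_real (d i) * cinner (u i) x * cinner x (u i))"
    unfolding eig_apply[OF assms] by (simp add: cinner_sum_right cinner_scale_right)
  also have "\<dots> = (\<Sum>i\<in>UNIV. complex_of_real (d i * (cmod (cinner (u i) x))^2))"
  proof (rule sum.cong)
    fix i
    have "cinner x (u i) = cnj (cinner (u i) x)" by (rule cinner_commute)
    then show "complex_of_real (d i) * cinner (u i) x * cinner x (u i) = complex_of_real (d i * (cmod (cinner (u i) x))^2)"
      by (simp only: mult.assoc zcnj of_real_mult)
  qed simp
  finally show ?thesis by (metis Re_complex_of_real of_real_sum)
qed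

lemma if01_mult: "(if P then 1 else 0) * (z::complex) = (if P then z else 0)"
  by simp

lemma cinner_axis: "cinner (axis k 1) y = y $ k"
  unfolding cinner_def axis_def by (simp add: if_distrib[of cnj] if01_mult cong: if_cong)
lemma mv_axis: "((M::complex^'n^'n) *v axis k 1) $ i = M $ i $ k"
  unfolding matrix_vector_mult_def axis_def by (simp add: if_distrib[of "\<lambda>x. _ * x"] cong: if_cong)
lemma axis_cinner: "cinner y (axis k 1) = cnj (y $ k)"
  unfolding cinner_def axis_def by (simp add: if_distrib[of "\<lambda>x. _ * x"] cong: if_cong)

lemma trace_ON:
  fixes M :: "complex^'n^'n"
  assumes "ON u" shows "trace M = (\<Sum>i\<in>UNIV. cinner (u i) (M *v u i))"
proof -
  define e where "e k = (axis k 1 :: complex^'n)" for k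
  have Mkk: "M $ k $ k = cinner (e k) (M *v e k)" for k
    by (simp add: e_def cinner_axis mv_axis)
  have c1: "cinner (u i) (e k) = cnj (u i $ k)" for i k
    by (simp add: e_def axis_cinner)
  have c2: "cinner (u i) (M *v e k) = cnj ((cmat_adjoint M *v u i) $ k)" for i k
    unfolding cinner_adjoint by (simp add: e_def axis_cinner)
  have "trace M = (\<Sum>k\<in>UNIV. \<Sum>i\<in>UNIV. u i $ k * cnj ((cmat_adjoint M *v u i) $ k))"
    unfolding trace_def Mkk ON_parseval[OF assms, of "e _"] c1 c2 by simp
  also have "\<dots> = (\<Sum>i\<in>UNIV. cinner (cmat_adjoint M *v u i) (u i))"
    by (subst sum.swap) (simp add: cinner_def mult.commute)
  also have "\<dots> = (\<Sum>i\<in>UNIV. cinner (u i) (M *v u i))" by (simp add: cinner_adjoint)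
  finally show ?thesis .
qed

lemma eig_trace:
  assumes "ON u" "\<forall>i. A *v u i = complex_of_real (d i) *s u i"
  shows "trace A = complex_of_real (\<Sum>i\<in>UNIV. d i)"
  unfolding trace_ON[OF assms(1)] using assms by (simp add: cinner_scale_right ON_def)

definition outer :: "complex^'n \<Rightarrow> complex^'n \<Rightarrow> complex^'n^'n" where
  "outer a b = (\<chi> i j. a $ i * cnj (b $ j))"

lemma outer_mv: "outer a b *v x = cinner b x *s a"
  by (simp add: vec_eq_iff matrix_vector_mult_def outer_def cinner_def sum_distrib_left mult_ac)

definition sdiag :: "('n \<Rightarrow> complex^'n) \<Rightarrow> ('n \<Rightarrow> real) \<Rightarrow> complex^'n^'n" where
  "sdiag u f = (\<Sum>i\<in>UNIV. f i *\<^sub>R outer (u i) (u i))"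

lemma mv_sum: "(\<Sum>i\<in>S. M i) *v (x::complex^'n) = (\<Sum>i\<in>S. M i *v x)"
  by (induct S rule: infinite_finite_induct) (auto simp: matrix_vector_mult_add_rdistrib)

lemma mv_scaleR: "(c *\<^sub>R (M::complex^'n^'n)) *v x = c *\<^sub>R (M *v x)"
  by (simp add: vec_eq_iff matrix_vector_mult_def scaleR_sum_right)

lemma sdiag_mv: "sdiag u f *v x = (\<Sum>i\<in>UNIV. (complex_of_real (f i) * cinner (u i) x) *s u i)"
  unfolding sdiag_def mv_sum mv_scaleR outer_mv scaleR_cvec vector_smult_assoc ..

lemma sdiag_eig:
  assumes "ON u" shows "\<forall>i. sdiag u f *v u i = complex_of_real (f i) *s u i"
proof
  fix i
  have "sdiag u f *v u i = (\<Sum>j\<in>UNIV. (if j = i then complex_of_real (f j) *s u j else 0))"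
    unfolding sdiag_mv using assms by (intro sum.cong) (auto simp: ON_def)
  also have "\<dots> = complex_of_real (f i) *s u i" by simp
  finally show "sdiag u f *v u i = complex_of_real (f i) *s u i" .
qed

lemma eig_sdiag:
  assumes "ON u" "\<forall>i. A *v u i = complex_of_real (d i) *s u i"
  shows "A = sdiag u d"
  unfolding matrix_eq eig_apply[OF assms] eig_apply[OF assms(1) sdiag_eig[OF assms(1)]] by simp

lemma adj_mv_herm:
  assumes "\<forall>x y. cinner x (M *v y) = cinner (M *v x) y"
  shows "cmat_hermitian M"
proof -
  have "cmat_adjoint M *v x = M *v x" for x
  proof -
    have "cinner (cmat_adjoint M *v x - M *v x) y = 0" for y
      using assms by (simp add: cinner_diff_left cinner_adjoint[symmetric])
    from this[of "cmat_adjoint M *v x - M *v x"] show ?thesis by simp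
  qed
  then show ?thesis unfolding cmat_hermitian_def matrix_eq by simp
qed

lemma eig_herm:
  assumes "ON u" "\<forall>i. A *v u i = complex_of_real (d i) *s u i"
  shows "cmat_hermitian A"
proof (rule adj_mv_herm, intro allI)
  fix x y
  show "cinner x (A *v y) = cinner (A *v x) y"
    unfolding eig_apply[OF assms]
    by (simp add: cinner_sum_left cinner_sum_right cinner_scale_left cinner_scale_right
        cinner_commute[of x] mult_ac)
qed

lemma eig_psd:
  assumes "ON u" "\<forall>i. A *v u i = complex_of_real (d i) *s u i" "\<forall>i. 0 \<le> d i"
  shows "cmat_psd A"
  unfolding psd_iff using eig_herm[OF assms(1,2)] eig_form[OF assms(1,2)] assms(3)
  by (simp add: sum_nonneg)

lemma eig_val_form:
  assumes "ON u" "\<forall>i. A *v u i = complex_of_real (d i) *s u i"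
  shows "cinner (u i) (A *v u i) = complex_of_real (d i)"
  using assms by (simp add: cinner_scale_right ON_def)

lemma eig_mult:
  assumes "\<forall>i. A *v u i = complex_of_real (a i) *s u i" "\<forall>i. B *v u i = complex_of_real (b i) *s u i"
  shows "\<forall>i. (A ** B) *v u i = complex_of_real (a i * b i) *s u i"
  using assms by (simp add: matrix_vector_mul_assoc[symmetric] mv_scale vector_smult_assoc mult.commute)

lemma psd_zero_form:
  assumes P: "cmat_psd P" and z: "Re (cinner x (P *v x)) = 0"
  shows "P *v x = 0"
proof -
  obtain u d where on: "ON u" and eg: "\<forall>i. P *v u i = complex_of_real (d i) *s u i"
    using spectral P psd_iff by blast
  have dn: "0 \<le> d i" for i
    using P eig_val_form[OF on eg, of i] unfolding psd_iff by (metis Re_complex_of_real)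
  have "(\<Sum>i\<in>UNIV. d i * (cmod (cinner (u i) x))^2) = 0" using z eig_form[OF on eg] by simp
  then have "\<forall>i\<in>UNIV. d i * (cmod (cinner (u i) x))^2 = 0"
    by (subst sum_nonneg_eq_0_iff[symmetric]) (auto simp: dn)
  then have F: "\<And>i. complex_of_real (d i) * cinner (u i) x = 0" by auto
  show ?thesis unfolding eig_apply[OF on eg] F by simp
qed

lemma adj_diff: "cmat_adjoint (A - B) = cmat_adjoint A - cmat_adjoint B"
  by (simp add: cmat_adjoint_def vec_eq_iff)

lemma psd_root_unique:
  fixes P Q :: "complex^'n^'n"
  assumes P: "cmat_psd P" and Q: "cmat_psd Q" and sq: "P ** P = Q ** Q"
  shows "P = Q"
proof -
  define D where "D = P - Q"
  have hP: "cmat_hermitian P" and hQ: "cmat_hermitian Q" using P Q psd_iff by auto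
  have hD: "cmat_hermitian D" using hP hQ by (simp add: D_def cmat_hermitian_def adj_diff)
  obtain w \<mu> where on: "ON w" and eg: "\<forall>i. D *v w i = complex_of_real (\<mu> i) *s w i"
    using spectral[OF hD] by blast
  have mu0: "\<mu> i = 0" for i
  proof (rule ccontr)
    assume nz: "\<mu> i \<noteq> 0"
    define x where "x = w i"
    have xx: "cinner x x = 1" using on by (simp add: ON_def x_def)
    have Dx: "D *v x = complex_of_real (\<mu> i) *s x" using eg x_def by simp
    have Dv: "D *v v = P *v v - Q *v v" for v by (simp add: D_def matrix_vector_mult_diff_rdistrib)
    have "P *v (P *v x) = Q *v (Q *v x)" using sq by (simp add: matrix_vector_mul_assoc)
    then have "P *v (D *v x) + D *v (Q *v x) = 0"
      by (simp add: Dv matrix_vector_mult_diff_distrib)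
    then have "cinner x (P *v (D *v x)) + cinner x (D *v (Q *v x)) = 0"
      by (metis cinner_add_right cinner_zero_right)
    moreover have "cinner x (D *v (Q *v x)) = cinner (D *v x) (Q *v x)" by (rule cinner_herm[OF hD])
    ultimately have "complex_of_real (\<mu> i) * (cinner x (P *v x) + cinner x (Q *v x)) = 0"
      unfolding Dx by (simp add: mv_scale cinner_scale_right cinner_scale_left distrib_left)
    then have ab: "cinner x (P *v x) + cinner x (Q *v x) = 0" using nz by simp
    have "Re (cinner x (P *v x)) + Re (cinner x (Q *v x)) = 0" using ab by (metis plus_complex.sel(1) zero_complex.sel(1))
    moreover have "0 \<le> Re (cinner x (P *v x))" "0 \<le> Re (cinner x (Q *v x))" using P Q psd_iff by auto
    ultimately have "Re (cinner x (P *v x)) = 0" "Re (cinner x (Q *v x)) = 0" by auto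
    then have "P *v x = 0" "Q *v x = 0" using psd_zero_form P Q by auto
    then have "complex_of_real (\<mu> i) *s x = 0" using Dx Dv by simp
    then have "x = 0" using nz by simp
    then show False using xx by simp
  qed
  have "D *v x = 0 *v x" for x unfolding eig_apply[OF on eg] using mu0 by simp
  then have "D = 0" using matrix_eq by blast
  then show ?thesis by (simp add: D_def)
qed

lemma trace_norm_eig:
  fixes H :: "complex^'n^'n"
  assumes hH: "cmat_hermitian H" and on: "ON u" and eg: "\<forall>i. H *v u i = complex_of_real (d i) *s u i"
  shows "trace_norm H = (\<Sum>i\<in>UNIV. \<bar>d i\<bar>)"
proof -
  define P where "P = sdiag u (\<lambda>i. \<bar>d i\<bar>)"
  have eP: "\<forall>i. P *v u i = complex_of_real \<bar>d i\<bar> *s u i" unfolding P_def using sdiag_eig[OF on] by blast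
  have pP: "cmat_psd P" by (rule eig_psd[OF on eP]) simp
  have "P ** P = sdiag u (\<lambda>i. \<bar>d i\<bar> * \<bar>d i\<bar>)" by (rule eig_sdiag[OF on eig_mult[OF eP eP]])
  also have "\<dots> = sdiag u (\<lambda>i. d i * d i)" by (simp add: abs_mult_self_eq)
  also have "\<dots> = H ** H" by (rule eig_sdiag[OF on eig_mult[OF eg eg], symmetric])
  finally have sq: "P ** P = cmat_adjoint H ** H" using hH by (simp add: cmat_hermitian_def)
  have "cmat_abs H = P" unfolding cmat_abs_def
  proof (rule the_equality)
    show "cmat_psd P \<and> P ** P = cmat_adjoint H ** H" using pP sq by simp
    fix Q assume "cmat_psd Q \<and> Q ** Q = cmat_adjoint H ** H"
    then show "Q = P" using psd_root_unique[of Q P] pP sq by simp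
  qed
  then show ?thesis unfolding trace_norm_def using eig_trace[OF on eP] by simp
qed

lemma adj_scaleR: "cmat_adjoint (c *\<^sub>R A) = c *\<^sub>R cmat_adjoint A"
  by (simp add: cmat_adjoint_def vec_eq_iff)

lemma trace_scaleR: "trace (c *\<^sub>R (A::complex^'n^'n)) = c *\<^sub>R trace A"
  by (simp add: trace_def scaleR_sum_right)

lemma density_spec:
  assumes "density x"
  obtains u e where "ON u" "\<forall>i. x *v u i = complex_of_real (e i) *s u i"
    "\<forall>i. 0 \<le> e i" "(\<Sum>i\<in>UNIV. e i) = 1"
proof -
  have psd: "cmat_psd x" and tr: "trace x = 1" using assms by (auto simp: density_def)
  obtain u e where on: "ON u" and eg: "\<forall>i. x *v u i = complex_of_real (e i) *s u i"
    using spectral psd psd_iff by blast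
  have "0 \<le> e i" for i
    using psd eig_val_form[OF on eg, of i] unfolding psd_iff by (metis Re_complex_of_real)
  moreover have "complex_of_real (\<Sum>i\<in>UNIV. e i) = complex_of_real 1" using eig_trace[OF on eg] tr by (simp only:) simp
  then have "(\<Sum>i\<in>UNIV. e i) = 1" by (simp only: of_real_eq_iff)
  ultimately show ?thesis using that on eg by blast
qed

lemma density_form_le:
  assumes "density x"
  shows "Re (cinner y (x *v y)) \<le> (norm y)^2"
proof -
  obtain u e where on: "ON u" and eg: "\<forall>i. x *v u i = complex_of_real (e i) *s u i"
    and en: "\<forall>i. 0 \<le> e i" and es: "(\<Sum>i\<in>UNIV. e i) = 1"
    using density_spec[OF assms] by blast
  have "Re (cinner y (x *v y)) = (\<Sum>i\<in>UNIV. e i * (cmod (cinner (u i) y))^2)" by (rule eig_form[OF on eg])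
  also have "\<dots> \<le> (\<Sum>i\<in>UNIV. e i * (norm y)^2)"
    by (rule sum_mono) (use en ON_norm_le[OF on] in \<open>auto intro: mult_left_mono\<close>)
  also have "\<dots> = (norm y)^2" using es by (simp add: sum_distrib_right[symmetric])
  finally show ?thesis .
qed

lemma outer_density:
  assumes vv: "cinner v v = 1"
  shows "density (outer v v)"
proof -
  have h: "cmat_hermitian (outer v v)"
    by (rule adj_mv_herm) (auto simp: outer_mv cinner_scale_right cinner_scale_left cinner_commute[of x v for x] mult.commute)
  have f: "cinner y (outer v v *v y) = complex_of_real ((cmod (cinner v y))^2)" for y
  proof -
    have "cinner y (outer v v *v y) = cinner v y * cnj (cinner v y)"
      by (simp add: outer_mv cinner_scale_right cinner_commute[of y v] mult.commute)
    then show ?thesis by (simp only: complex_norm_square)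
  qed
  have "trace (outer v v) = cinner v v"
    by (simp add: trace_def outer_def cinner_def mult.commute)
  then show ?thesis using h f vv by (simp add: density_def psd_iff)
qed

lemma dens_comb:
  assumes r: "density \<rho>" and x: "density x" and t0: "0 \<le> t" and t1: "t < 1"
  shows "density ((1 / (1 - t)) *\<^sub>R (\<rho> - t *\<^sub>R x)) \<longleftrightarrow>
    (\<forall>y. t * Re (cinner y (x *v y)) \<le> Re (cinner y (\<rho> *v y)))"
proof -
  define M where "M = (1 / (1 - t)) *\<^sub>R (\<rho> - t *\<^sub>R x)"
  have hr: "cmat_hermitian \<rho>" and hx: "cmat_hermitian x" using r x by (auto simp: density_def psd_iff)
  have hM: "cmat_hermitian M" using hr hx by (simp add: M_def cmat_hermitian_def adj_scaleR adj_diff)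
  have "trace \<rho> = 1" "trace x = 1" using r x by (auto simp: density_def)
  then have "trace M = (1 / (1 - t)) *\<^sub>R ((1 - t) *\<^sub>R (1::complex))"
    by (simp add: M_def trace_scaleR trace_sub scaleR_diff_left)
  also have "\<dots> = ((1 / (1 - t)) * (1 - t)) *\<^sub>R (1::complex)" by (simp only: scaleR_scaleR)
  also have "(1 / (1 - t)) * (1 - t) = 1" using t1 by simp
  finally have trM: "trace M = 1" by simp
  have fM: "Re (cinner y (M *v y)) = (1 / (1 - t)) * (Re (cinner y (\<rho> *v y)) - t * Re (cinner y (x *v y)))" for y
    by (simp add: M_def mv_scaleR matrix_vector_mult_diff_rdistrib cinner_scaleR_right cinner_diff_right)
  have pos: "1 / (1 - t) > 0" using t1 by simp
  have "(0 \<le> Re (cinner y (M *v y))) \<longleftrightarrow> t * Re (cinner y (x *v y)) \<le> Re (cinner y (\<rho> *v y))" for y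
    unfolding fM using pos by (simp add: zero_le_divide_iff)
  then show ?thesis using hM trM unfolding M_def[symmetric] by (simp add: density_def psd_iff)
qed

lemma abs_sum_split:
  fixes \<mu> :: "'a::finite \<Rightarrow> real"
  assumes s0: "(\<Sum>i\<in>UNIV. \<mu> i) = 0"
  shows "(\<Sum>i\<in>UNIV. \<bar>\<mu> i\<bar>) = 2 * (\<Sum>i\<in>{i. 0 < \<mu> i}. \<mu> i)"
    and "(\<Sum>i\<in>UNIV. \<bar>\<mu> i\<bar>) = - 2 * (\<Sum>i\<in>{i. \<not> 0 < \<mu> i}. \<mu> i)"
proof -
  define P where "P = {i. 0 < \<mu> i}"
  define N where "N = {i. \<not> 0 < \<mu> i}"
  have U: "(\<Sum>i\<in>UNIV. f i) = (\<Sum>i\<in>P. f i) + (\<Sum>i\<in>N. f i)" for f :: "'a \<Rightarrow> real"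
  proof -
    have "(\<Sum>i\<in>UNIV. f i) = (\<Sum>i\<in>UNIV \<inter> P. f i) + (\<Sum>i\<in>UNIV - P. f i)" by (rule sum.Int_Diff) simp
    moreover have "UNIV - P = N" by (auto simp: P_def N_def)
    ultimately show ?thesis by simp
  qed
  have aP: "(\<Sum>i\<in>P. \<bar>\<mu> i\<bar>) = (\<Sum>i\<in>P. \<mu> i)" by (rule sum.cong) (auto simp: P_def)
  have aN: "(\<Sum>i\<in>N. \<bar>\<mu> i\<bar>) = - (\<Sum>i\<in>N. \<mu> i)" by (subst sum_negf[symmetric], rule sum.cong) (auto simp: N_def)
  have "(\<Sum>i\<in>P. \<mu> i) + (\<Sum>i\<in>N. \<mu> i) = 0" using s0 U[of \<mu>] by simp
  then show "(\<Sum>i\<in>UNIV. \<bar>\<mu> i\<bar>) = 2 * (\<Sum>i\<in>{i. 0 < \<mu> i}. \<mu> i)"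
    and "(\<Sum>i\<in>UNIV. \<bar>\<mu> i\<bar>) = - 2 * (\<Sum>i\<in>{i. \<not> 0 < \<mu> i}. \<mu> i)"
    using U[of "\<lambda>i. \<bar>\<mu> i\<bar>"] aP aN unfolding P_def N_def by linarith+
qed

lemma ON_norm1: "ON w \<Longrightarrow> (norm (w k))^2 = 1"
proof -
  assume "ON w"
  then have "complex_of_real ((norm (w k))^2) = complex_of_real 1"
    using cinner_self[of "w k"] by (simp add: ON_def del: of_real_power)
  then show ?thesis by (simp only: of_real_eq_iff)
qed

theorem proposition7:
  fixes \<rho> :: "complex^'n^'n"
  assumes "density \<rho>"
  shows "(SUP \<xi>\<in>{\<xi>. density \<xi>}. trace_norm (\<rho> - \<xi>)) = 2 * (1 - boundariness \<rho>)"
proof -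
  obtain u d where on: "ON u" and eg: "\<forall>i. \<rho> *v u i = complex_of_real (d i) *s u i"
    and dn: "\<forall>i. 0 \<le> d i" and ds: "(\<Sum>i\<in>UNIV. d i) = 1"
    using density_spec[OF assms] by blast
  have psd: "cmat_psd \<rho>" and hr: "cmat_hermitian \<rho>" and trr: "trace \<rho> = 1"
    using assms by (auto simp: density_def psd_iff)
  define m where "m = Min (range d)"
  have mle: "m \<le> d i" for i unfolding m_def by simp
  have "m \<in> range d" unfolding m_def by (rule Min_in) auto
  then obtain i0 where i0: "d i0 = m" by auto
  define v where "v = u i0"
  have vv: "cinner v v = 1" using on by (simp add: ON_def v_def)
  have rv: "\<rho> *v v = complex_of_real m *s v" using eg i0 v_def by simp
  have m0: "0 \<le> m" using dn i0 by metis
  have m1: "m \<le> 1"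
  proof -
    have "d i0 \<le> (\<Sum>i\<in>UNIV. d i)" by (rule member_le_sum) (use dn in auto)
    then show ?thesis using ds i0 by simp
  qed
  have formr: "m * (norm y)^2 \<le> Re (cinner y (\<rho> *v y))" for y
  proof -
    have "m * (norm y)^2 = (\<Sum>i\<in>UNIV. m * (cmod (cinner (u i) y))^2)"
      by (simp add: ON_norm[OF on] sum_distrib_left)
    also have "\<dots> \<le> (\<Sum>i\<in>UNIV. d i * (cmod (cinner (u i) y))^2)"
      by (rule sum_mono) (simp add: mle mult_right_mono)
    also have "\<dots> = Re (cinner y (\<rho> *v y))" by (rule eig_form[OF on eg, symmetric])
    finally show ?thesis .
  qed
  have formv: "cinner v (\<rho> *v v) = complex_of_real m" using rv vv by (simp add: cinner_scale_right)
  define V where "V = outer v v"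
  have dV: "density V" unfolding V_def by (rule outer_density[OF vv])
  have Vv: "V *v v = v" using vv by (simp add: V_def outer_mv)
  have formVv: "cinner v (V *v v) = 1" using Vv vv by simp

  define T where "T x = {t::real. 0 \<le> t \<and> t < 1 \<and> density ((1 / (1 - t)) *\<^sub>R (\<rho> - t *\<^sub>R x))}" for x
  have wdef: "weight \<rho> x = Sup (T x)" for x by (simp add: weight_def T_def)
  have T_iff: "t \<in> T x \<longleftrightarrow> 0 \<le> t \<and> t < 1 \<and> (\<forall>y. t * Re (cinner y (x *v y)) \<le> Re (cinner y (\<rho> *v y)))"
    if "density x" for x t
    using dens_comb[OF assms that] by (auto simp: T_def)
  have lowT: "t \<in> T x" if dx: "density x" and "0 \<le> t" "t \<le> m" "t < 1" for x t
  proof -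
    have "t * Re (cinner y (x *v y)) \<le> Re (cinner y (\<rho> *v y))" for y
    proof -
      have "t * Re (cinner y (x *v y)) \<le> t * (norm y)^2"
        using density_form_le[OF dx] \<open>0 \<le> t\<close> by (simp add: mult_left_mono)
      also have "\<dots> \<le> m * (norm y)^2" using \<open>t \<le> m\<close> by (simp add: mult_right_mono)
      finally show ?thesis using formr[of y] by linarith
    qed
    then show ?thesis using T_iff[OF dx] that by auto
  qed
  have bddT: "bdd_above (T x)" for x by (rule bdd_aboveI[of _ 1]) (auto simp: T_def)
  have wge: "m \<le> weight \<rho> x" if dx: "density x" for x
  proof (cases "m = 0")
    case True
    have "0 \<in> T x" using lowT[OF dx] m0 by simp
    then show ?thesis unfolding wdef using True cSup_upper[OF _ bddT] by blast
  next
    case False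
    then have "0 < m" using m0 by simp
    then show ?thesis unfolding wdef
    proof (rule dense_le_bounded)
      fix w assume "0 < w" "w < m"
      then have "w \<in> T x" using lowT[OF dx, of w] m1 by simp
      then show "w \<le> Sup (T x)" using cSup_upper[OF _ bddT] by blast
    qed
  qed
  have wV: "weight \<rho> V \<le> m" unfolding wdef
  proof (rule cSup_least)
    show "T V \<noteq> {}" using lowT[OF dV, of 0] m0 by auto
    fix t assume "t \<in> T V"
    then have "t * Re (cinner v (V *v v)) \<le> Re (cinner v (\<rho> *v v))" using T_iff[OF dV] by blast
    then show "t \<le> m" using formVv formv by simp
  qed
  have bnd: "boundariness \<rho> = m" unfolding boundariness_def
  proof (rule cInf_eq_minimum)
    show "m \<in> weight \<rho> ` {x. density x}" using wV wge[OF dV] dV by (intro image_eqI[of _ _ V]) auto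
    show "\<And>x. x \<in> weight \<rho> ` {x. density x} \<Longrightarrow> m \<le> x" using wge by auto
  qed

  have spH: "\<exists>w \<mu>. ON w \<and> (\<forall>i. (\<rho> - \<xi>) *v w i = complex_of_real (\<mu> i) *s w i) \<and>
      trace_norm (\<rho> - \<xi>) = (\<Sum>i\<in>UNIV. \<bar>\<mu> i\<bar>) \<and> (\<Sum>i\<in>UNIV. \<mu> i) = 0" if dx: "density \<xi>" for \<xi>
  proof -
    have hx: "cmat_hermitian \<xi>" and tx: "trace \<xi> = 1" using dx by (auto simp: density_def psd_iff)
    have hH: "cmat_hermitian (\<rho> - \<xi>)" using hr hx by (simp add: cmat_hermitian_def adj_diff)
    obtain w \<mu> where onw: "ON w" and egw: "\<forall>i. (\<rho> - \<xi>) *v w i = complex_of_real (\<mu> i) *s w i"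
      using spectral[OF hH] by blast
    have "complex_of_real (\<Sum>i\<in>UNIV. \<mu> i) = complex_of_real 0"
      using eig_trace[OF onw egw] trr tx by (simp add: trace_sub)
    then have "(\<Sum>i\<in>UNIV. \<mu> i) = 0" by (simp only: of_real_eq_iff)
    then show ?thesis using onw egw trace_norm_eig[OF hH onw egw] by blast
  qed
  have upper: "trace_norm (\<rho> - \<xi>) \<le> 2 * (1 - m)" if dx: "density \<xi>" for \<xi>
  proof -
    obtain w \<mu> where onw: "ON w" and egw: "\<forall>i. (\<rho> - \<xi>) *v w i = complex_of_real (\<mu> i) *s w i"
      and tn: "trace_norm (\<rho> - \<xi>) = (\<Sum>i\<in>UNIV. \<bar>\<mu> i\<bar>)" and s0: "(\<Sum>i\<in>UNIV. \<mu> i) = 0"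
      using spH[OF dx] by blast
    have psx: "cmat_psd \<xi>" using dx by (simp add: density_def)
    define P where "P = {i. 0 < \<mu> i}"
    have "P \<noteq> UNIV"
    proof
      assume "P = UNIV"
      then have "0 < (\<Sum>i\<in>UNIV. \<mu> i)" by (intro sum_pos) (auto simp: P_def)
      then show False using s0 by simp
    qed
    then obtain k where k: "k \<notin> P" by auto
    define r where "r i = Re (cinner (w i) (\<rho> *v w i))" for i
    have rn: "0 \<le> r i" for i using psd by (simp add: r_def psd_iff)
    have rs: "(\<Sum>i\<in>UNIV. r i) = 1"
    proof -
      have "trace \<rho> = (\<Sum>i\<in>UNIV. cinner (w i) (\<rho> *v w i))" by (rule trace_ON[OF onw])
      then have "Re (trace \<rho>) = (\<Sum>i\<in>UNIV. r i)" by (simp add: r_def)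
      then show ?thesis using trr by simp
    qed
    have rk: "m \<le> r k" using formr[of "w k"] ON_norm1[OF onw] by (simp add: r_def)
    have muP: "\<mu> i \<le> r i" for i
    proof -
      have "complex_of_real (\<mu> i) = cinner (w i) ((\<rho> - \<xi>) *v w i)" by (rule eig_val_form[OF onw egw, symmetric])
      then have "complex_of_real (\<mu> i) = cinner (w i) (\<rho> *v w i) - cinner (w i) (\<xi> *v w i)"
        by (simp add: matrix_vector_mult_diff_rdistrib cinner_diff_right)
      then have "\<mu> i = Re (cinner (w i) (\<rho> *v w i) - cinner (w i) (\<xi> *v w i))"
        by (metis Re_complex_of_real)
      then have "\<mu> i = r i - Re (cinner (w i) (\<xi> *v w i))" by (simp add: r_def)
      moreover have "0 \<le> Re (cinner (w i) (\<xi> *v w i))" using psx by (simp add: psd_iff)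
      ultimately show ?thesis by simp
    qed
    have "(\<Sum>i\<in>P. \<mu> i) \<le> (\<Sum>i\<in>P. r i)" by (rule sum_mono) (rule muP)
    also have "\<dots> \<le> (\<Sum>i\<in>UNIV - {k}. r i)" by (rule sum_mono2) (use k rn in auto)
    also have "\<dots> = 1 - r k" using sum.remove[of UNIV k r] rs by simp
    finally have "(\<Sum>i\<in>P. \<mu> i) \<le> 1 - m" using rk by simp
    then show ?thesis using tn abs_sum_split(1)[OF s0] unfolding P_def by simp
  qed
  have lower: "2 * (1 - m) \<le> trace_norm (\<rho> - V)"
  proof -
    obtain w \<mu> where onw: "ON w" and egw: "\<forall>i. (\<rho> - V) *v w i = complex_of_real (\<mu> i) *s w i"
      and tn: "trace_norm (\<rho> - V) = (\<Sum>i\<in>UNIV. \<bar>\<mu> i\<bar>)" and s0: "(\<Sum>i\<in>UNIV. \<mu> i) = 0"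
      using spH[OF dV] by blast
    define c where "c i = (cmod (cinner (w i) v))^2" for i
    have nv: "(norm v)^2 = 1" unfolding v_def by (rule ON_norm1[OF on])
    have c1: "c i \<le> 1" for i using ON_norm_le[OF onw, of i v] unfolding c_def nv .
    define P where "P = {i. 0 < \<mu> i}"
    define N where "N = {i. \<not> 0 < \<mu> i}"
    have "m - 1 = Re (cinner v ((\<rho> - V) *v v))"
      using formv formVv by (simp add: matrix_vector_mult_diff_rdistrib cinner_diff_right)
    also have "\<dots> = (\<Sum>i\<in>UNIV. \<mu> i * c i)" unfolding c_def by (rule eig_form[OF onw egw])
    also have "\<dots> = (\<Sum>i\<in>UNIV \<inter> P. \<mu> i * c i) + (\<Sum>i\<in>UNIV - P. \<mu> i * c i)" by (rule sum.Int_Diff) simp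
    also have "UNIV - P = N" by (auto simp: P_def N_def)
    also have "(\<Sum>i\<in>UNIV \<inter> P. \<mu> i * c i) \<ge> 0" by (rule sum_nonneg) (auto simp: P_def c_def)
    then have "(\<Sum>i\<in>UNIV \<inter> P. \<mu> i * c i) + (\<Sum>i\<in>N. \<mu> i * c i) \<ge> (\<Sum>i\<in>N. \<mu> i)"
    proof -
      have "(\<Sum>i\<in>N. \<mu> i) \<le> (\<Sum>i\<in>N. \<mu> i * c i)"
      proof (rule sum_mono)
        fix i assume "i \<in> N"
        then have "\<mu> i \<le> 0" by (simp add: N_def)
        moreover have "0 \<le> c i" by (simp add: c_def)
        ultimately have "\<mu> i * 1 \<le> \<mu> i * c i" using c1[of i] by (intro mult_left_mono_neg) auto
        then show "\<mu> i \<le> \<mu> i * c i" by simp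
      qed
      then show ?thesis using \<open>(\<Sum>i\<in>UNIV \<inter> P. \<mu> i * c i) \<ge> 0\<close> by linarith
    qed
    finally have "(\<Sum>i\<in>N. \<mu> i) \<le> m - 1" .
    then show ?thesis using tn abs_sum_split(2)[OF s0] unfolding N_def by simp
  qed
  have "(SUP \<xi>\<in>{\<xi>. density \<xi>}. trace_norm (\<rho> - \<xi>)) = 2 * (1 - m)"
  proof (rule cSup_eq_maximum)
    show "2 * (1 - m) \<in> (\<lambda>\<xi>. trace_norm (\<rho> - \<xi>)) ` {\<xi>. density \<xi>}"
      using lower upper[OF dV] dV by (intro image_eqI[of _ _ V]) auto
    show "\<And>x. x \<in> (\<lambda>\<xi>. trace_norm (\<rho> - \<xi>)) ` {\<xi>. density \<xi>} \<Longrightarrow> x \<le> 2 * (1 - m)"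
      using upper by auto
  qed
  then show ?thesis using bnd by simp
qed

end
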